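(* Consider a discrete-time model $t=0,1,2,\ldots$ of a company's Short Term Net Financial Position (STNFP) $D_{S,t}$, along a fixed realization, evolving by $$D_{S,t}=D_{S,t-1}-C_t,\qquad C_t=F_t-S_t,\qquad S_t=c_t+I_{L,t}+I_{S,t},\qquad t\ge 1,$$ where $F_t$ is the free cash flow at time $t$, $c_t+I_{L,t}$ is the term-debt service at time $t$, and $I_{S,t}=\mathbf r\, D_{S,t-1}$ is the interest paid at time $t$ on the STNFP outstanding at the beginning of the period, with a constant interest rate $\mathbf r\in(0,1)$. Assume there is a time $t_{SS}$ such that $F_t=F$ is constant for all $t\ge t_{SS}$, and assume $K:=c_t+I_{L,t}$ is the same constant for all $t$. If at some time $\bar t\ge t_{SS}$ the STNFP is decreasing, i.e. $D_{S,\bar t}< D_{S,\bar t-1}$, then $D_{S,t}< D_{S,t-1}$ for all $t\ge\bar t$.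
   Context: $D_{S,t}$ denotes the short-term net financial position (short-term debt) at time $t$; $C_t$ is its change (cash surplus) at time $t$. All quantities are real numbers along a given realization of the random cash flows. *)

theory Defs
  imports Complex_Main
begin

end

theory Submission
  imports Defs
begin

theorem corollaryA1:
  fixes D C F S c I_L I_S :: "nat \<Rightarrow> real"
    and r F_ss K :: real and t_SS t_bar :: nat
  assumes r_pos: "0 < r" and r_lt1: "r < 1"
    and D_rec: "\<And>t. t \<ge> 1 \<Longrightarrow> D t = D (t - 1) - C t"
    and C_def: "\<And>t. t \<ge> 1 \<Longrightarrow> C t = F t - S t"
    and S_def: "\<And>t. t \<ge> 1 \<Longrightarrow> S t = c t + I_L t + I_S t"
    and IS_def: "\<And>t. t \<ge> 1 \<Longrightarrow> I_S t = r * D (t - 1)"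
    and F_const: "\<And>t. t \<ge> t_SS \<Longrightarrow> F t = F_ss"
    and K_const: "\<And>t. c t + I_L t = K"
    and tbar_ge: "t_bar \<ge> t_SS" and tbar_pos: "t_bar \<ge> 1"
    and decr: "D t_bar < D (t_bar - 1)"
  shows "\<forall>t \<ge> t_bar. D t < D (t - 1)"
proof -
  have rec: "D t = (1 + r) * D (t - 1) - F_ss + K" if "t \<ge> t_bar" for t
  proof -
    have "t \<ge> 1" "t \<ge> t_SS" using that tbar_ge tbar_pos by auto
    then have "D t = D (t - 1) - (F t - (c t + I_L t + r * D (t - 1)))"
      using D_rec C_def S_def IS_def by simp
    then show ?thesis using F_const[OF \<open>t \<ge> t_SS\<close>] K_const[of t]
      by (simp add: algebra_simps)
  qed
  have step: "D (t_bar + n) < D (t_bar + n - 1)" for n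
  proof (induction n)
    case 0 then show ?case using decr by simp
  next
    case (Suc n)
    have a: "D (t_bar + Suc n) = (1 + r) * D (t_bar + n) - F_ss + K"
      using rec[of "t_bar + Suc n"] by simp
    have b: "D (t_bar + n) = (1 + r) * D (t_bar + n - 1) - F_ss + K"
      using rec[of "t_bar + n"] by simp
    have "D (t_bar + Suc n) - D (t_bar + Suc n - 1) = (1 + r) * (D (t_bar + n) - D (t_bar + n - 1))"
      using a b by (simp add: algebra_simps)
    moreover have "(1 + r) * (D (t_bar + n) - D (t_bar + n - 1)) < 0"
      using Suc r_pos by (simp add: mult_pos_neg)
    ultimately show ?case by simp
  qed
  show ?thesis
  proof (intro allI impI)
    fix t assume "t \<ge> t_bar"
    then obtain n where "t = t_bar + n" using le_Suc_ex by blast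
    then show "D t < D (t - 1)" using step by simp
  qed
qed

end
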